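(* For integers $n\ge1$ and $d\ge1$, let $N(n,d)$ be the number of cycle set structures on a fixed $n$-element set whose class divides $d$. If $d=p_1^{a_1}\cdots p_r^{a_r}$ is the prime factorization of $d$, then $$N(n,d)\le\prod_{i=1}^r N(n,p_i^{a_i}).$$
   Context: A cycle set structure on a set $S$ is a binary operation $*$ such that for every $s$ the map $t\mapsto s*t$ is a bijection of $S$ and $(s*t)*(s*u)=(t*s)*(t*u)$ for all $s,t,u\in S$. Write $S=\{s_1,\dots,s_n\}$, let $\psi(s)\in\mathfrak S_n$ satisfy $s_i*s_j=s_{\psi(s_i)(j)}$, $T(s)=s*s$, and $\psi_k(s)=\psi(T^{k-1}(s))\circ\cdots\circ\psi(T(s))\circ\psi(s)$. The class of the cycle set is the least integer $d\ge1$ with $\psi_d(s)=\mathrm{id}$ for all $s\in S$. (The paper does not specify whether cycle sets are counted up to isomorphism; here they are counted as operations on a fixed labelled set.) *)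

theory Defs
  imports "HOL-Library.FuncSet" "HOL-Computational_Algebra.Primes"
begin

text \<open>A cycle set structure on the carrier S: op s t plays the role of s * t.\<close>
definition cycle_set :: "'a set \<Rightarrow> ('a \<Rightarrow> 'a \<Rightarrow> 'a) \<Rightarrow> bool" where
  "cycle_set S op \<longleftrightarrow>
     (\<forall>s\<in>S. bij_betw (op s) S S) \<and>
     (\<forall>s\<in>S. \<forall>t\<in>S. \<forall>u\<in>S. op (op s t) (op s u) = op (op t s) (op t u))"

definition cs_T :: "('a \<Rightarrow> 'a \<Rightarrow> 'a) \<Rightarrow> 'a \<Rightarrow> 'a" where
  "cs_T op s = op s s"

fun cs_psi :: "('a \<Rightarrow> 'a \<Rightarrow> 'a) \<Rightarrow> nat \<Rightarrow> 'a \<Rightarrow> 'a \<Rightarrow> 'a" where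
  "cs_psi op 0 s = id"
| "cs_psi op (Suc k) s = op ((cs_T op ^^ k) s) \<circ> cs_psi op k s"

definition cs_psi_trivial :: "'a set \<Rightarrow> ('a \<Rightarrow> 'a \<Rightarrow> 'a) \<Rightarrow> nat \<Rightarrow> bool" where
  "cs_psi_trivial S op k \<longleftrightarrow> (\<forall>s\<in>S. \<forall>t\<in>S. cs_psi op k s t = t)"

definition cs_class :: "'a set \<Rightarrow> ('a \<Rightarrow> 'a \<Rightarrow> 'a) \<Rightarrow> nat" where
  "cs_class S op = (LEAST d. d \<ge> 1 \<and> cs_psi_trivial S op d)"

definition class_divides :: "'a set \<Rightarrow> ('a \<Rightarrow> 'a \<Rightarrow> 'a) \<Rightarrow> nat \<Rightarrow> bool" where
  "class_divides S op d \<longleftrightarrow>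
     (\<exists>k\<ge>1. cs_psi_trivial S op k) \<and> cs_class S op dvd d"

text \<open>N(n,d): number of cycle set operations on the labelled set {0..<n}
  (operations are represented extensionally, as extensional functions in PiE)
  whose class divides d.\<close>
definition N_cs :: "nat \<Rightarrow> nat \<Rightarrow> nat" where
  "N_cs n d = card {op \<in> {0..<n} \<rightarrow>\<^sub>E ({0..<n} \<rightarrow>\<^sub>E {0..<n}).
                      cycle_set {0..<n} op \<and> class_divides {0..<n} op d}"

end

theory Submission
  imports Defs "HOL-Number_Theory.Cong"
begin

lemma funpow_comm: "(f ^^ a) ((f ^^ b) x) = (f ^^ b) ((f ^^ a) x)"
  by (metis add.commute comp_apply funpow_add)

lemma psi_add: "cs_psi op (a+b) s = cs_psi op b ((cs_T op ^^ a) s) \<circ> cs_psi op a s"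
  by (induction b) (auto simp: funpow_add funpow_comm)

lemma psi_self: "cs_psi op k s s = (cs_T op ^^ k) s"
proof (induction k)
  case (Suc k)
  have "(cs_T op ^^ Suc k) s = op ((cs_T op ^^ k) s) ((cs_T op ^^ k) s)"
    by (simp add: cs_T_def)
  then show ?case using Suc by simp
qed simp

lemma psi_add_app: "cs_psi op (a+b) s t = cs_psi op b (cs_psi op a s s) (cs_psi op a s t)"
  by (simp add: psi_add psi_self)

lemma psi_one: "cs_psi op (Suc 0) s t = op s t"
  by simp

lemma T_in: assumes H: "\<forall>s\<in>S. \<forall>t\<in>S. op s t \<in> S" and "s \<in> S"
  shows "(cs_T op ^^ k) s \<in> S"
  using assms by (induction k) (auto simp: cs_T_def)

lemma psi_in: assumes H: "\<forall>s\<in>S. \<forall>t\<in>S. op s t \<in> S" and "s \<in> S" "t \<in> S"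
  shows "cs_psi op k s t \<in> S"
  using assms by (induction k) (auto simp: T_in)

lemma psi_bij: assumes "cycle_set S op" "s \<in> S"
  shows "bij_betw (cs_psi op k s) S S"
proof (induction k)
  case 0 then show ?case by (simp add: bij_betw_id[unfolded id_def])
next
  case (Suc k)
  have H: "\<forall>s\<in>S. \<forall>t\<in>S. op s t \<in> S" using assms(1) unfolding cycle_set_def
    by (meson bij_betwE)
  have "bij_betw (op ((cs_T op ^^ k) s)) S S"
    using assms T_in[OF H] unfolding cycle_set_def by blast
  then have "bij_betw (op ((cs_T op ^^ k) s) \<circ> cs_psi op k s) S S"
    using Suc bij_betw_trans by blast
  then show ?case by (simp add: comp_def)
qed

lemma triv_T: "cs_psi_trivial S op c \<Longrightarrow> s \<in> S \<Longrightarrow> (cs_T op ^^ c) s = s"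
  by (metis cs_psi_trivial_def psi_self)

lemma triv_mult: assumes "cs_psi_trivial S op c" shows "cs_psi_trivial S op (c*m)"
proof (induction m)
  case 0 then show ?case by (simp add: cs_psi_trivial_def)
next
  case (Suc m)
  have "c * Suc m = c + c*m" by simp
  then show ?case using Suc assms unfolding cs_psi_trivial_def
    by (metis psi_add_app)
qed

lemma triv_mod: assumes "cs_psi_trivial S op c" "cs_psi_trivial S op m"
  shows "cs_psi_trivial S op (m mod c)"
proof -
  have a: "cs_psi_trivial S op (c * (m div c))" using triv_mult assms(1) by blast
  have "m = c * (m div c) + m mod c" by simp
  then show ?thesis using a assms(2) unfolding cs_psi_trivial_def
    by (metis psi_add_app)
qed

lemma class_divides_iff: assumes "d \<ge> 1"
  shows "class_divides S op d \<longleftrightarrow> cs_psi_trivial S op d"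
proof
  assume "class_divides S op d"
  then obtain k where k: "k \<ge> 1" "cs_psi_trivial S op k" and dv: "cs_class S op dvd d"
    unfolding class_divides_def by blast
  have "cs_psi_trivial S op (cs_class S op)"
    unfolding cs_class_def using LeastI[of "\<lambda>d. d \<ge> 1 \<and> cs_psi_trivial S op d" k] k by blast
  then show "cs_psi_trivial S op d" using dv triv_mult by (metis dvdE)
next
  assume t: "cs_psi_trivial S op d"
  define c where "c = cs_class S op"
  have c: "c \<ge> 1" "cs_psi_trivial S op c"
    unfolding c_def cs_class_def using LeastI[of "\<lambda>d. d \<ge> 1 \<and> cs_psi_trivial S op d" d] t assms by blast+
  have r: "cs_psi_trivial S op (d mod c)" using triv_mod c t by blast
  have "d mod c = 0"
  proof (rule ccontr)
    assume "d mod c \<noteq> 0"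
    then have "cs_class S op \<le> d mod c" unfolding cs_class_def using r
      by (intro Least_le) simp
    then have "c \<le> d mod c" using c_def by simp
    moreover have "d mod c < c" using c by simp
    ultimately show False by simp
  qed
  then show "class_divides S op d" unfolding class_divides_def c_def[symmetric] using t assms by auto
qed

fun Pl :: "('a \<Rightarrow> 'a \<Rightarrow> 'a) \<Rightarrow> ('a \<Rightarrow> 'a) \<Rightarrow> 'a list \<Rightarrow> ('a \<Rightarrow> 'a)" where
  "Pl op R [] = R"
| "Pl op R (y # ys) = Pl op (op (R y) \<circ> R) ys"

lemma Pl_app: "Pl op R (xs @ ys) = Pl op (Pl op R xs) ys"
  by (induction xs arbitrary: R) auto

lemma Pl_snoc: "Pl op R (xs @ [y]) = op (Pl op R xs y) \<circ> Pl op R xs"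
  by (simp add: Pl_app)

lemma Pl_rep: "Pl op R (replicate m t) = cs_psi op m (R t) \<circ> R"
proof (induction m)
  case (Suc m)
  have "Pl op R (replicate (Suc m) t) = Pl op R (replicate m t @ [t])"
    by (metis replicate_Suc replicate_append_same)
  also have "\<dots> = op (cs_psi op m (R t) (R t)) \<circ> (cs_psi op m (R t) \<circ> R)"
    using Suc by (simp add: Pl_snoc comp_def)
  finally show ?case by (simp add: psi_self comp_assoc)
qed simp

lemma Pl_cong:
  assumes H: "\<forall>s\<in>S. \<forall>t\<in>S. op s t \<in> S"
  shows "\<forall>t\<in>S. R t = R' t \<Longrightarrow> \<forall>t\<in>S. R t \<in> S \<Longrightarrow> set ys \<subseteq> S \<Longrightarrow>
     \<forall>t\<in>S. Pl op R ys t = Pl op R' ys t"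
proof (induction ys arbitrary: R R')
  case Nil then show ?case by simp
next
  case (Cons y ys)
  have "\<forall>t\<in>S. (op (R y) \<circ> R) t = (op (R' y) \<circ> R') t" using Cons.prems by auto
  moreover have "\<forall>t\<in>S. (op (R y) \<circ> R) t \<in> S" using Cons.prems H by auto
  ultimately show ?case using Cons.IH Cons.prems by simp
qed

lemma Pl_closed:
  assumes H: "\<forall>s\<in>S. \<forall>t\<in>S. op s t \<in> S"
  shows "\<forall>t\<in>S. R t \<in> S \<Longrightarrow> set ys \<subseteq> S \<Longrightarrow> \<forall>t\<in>S. Pl op R ys t \<in> S"
proof (induction ys arbitrary: R)
  case (Cons y ys)
  have "\<forall>t\<in>S. (op (R y) \<circ> R) t \<in> S" using Cons.prems H by auto
  then show ?case using Cons by simp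
qed simp

lemma cs_closed: "cycle_set S op \<Longrightarrow> \<forall>s\<in>S. \<forall>t\<in>S. op s t \<in> S"
  unfolding cycle_set_def by (meson bij_betwE)

lemma Pl_swap:
  assumes C: "cycle_set S op" and R: "\<forall>t\<in>S. R t \<in> S" and ab: "a \<in> S" "b \<in> S"
    and ys: "set ys \<subseteq> S"
  shows "\<forall>t\<in>S. Pl op R (a # b # ys) t = Pl op R (b # a # ys) t"
proof -
  have H: "\<forall>s\<in>S. \<forall>t\<in>S. op s t \<in> S" using cs_closed[OF C] .
  let ?R1 = "op ((op (R a) \<circ> R) b) \<circ> (op (R a) \<circ> R)"
  let ?R2 = "op ((op (R b) \<circ> R) a) \<circ> (op (R b) \<circ> R)"
  have eq: "\<forall>t\<in>S. ?R1 t = ?R2 t"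
    using C R ab unfolding cycle_set_def by simp
  have cl: "\<forall>t\<in>S. ?R1 t \<in> S" using H R ab by simp
  have "\<forall>t\<in>S. Pl op ?R1 ys t = Pl op ?R2 ys t"
    using Pl_cong[OF H eq cl ys] .
  then show ?thesis by simp
qed

lemma Pl_move:
  assumes C: "cycle_set S op"
  shows "\<forall>t\<in>S. R t \<in> S \<Longrightarrow> y \<in> S \<Longrightarrow> set xs \<subseteq> S \<Longrightarrow>
     \<forall>t\<in>S. Pl op R (y # xs) t = Pl op R (xs @ [y]) t"
proof (induction xs arbitrary: R)
  case Nil then show ?case by simp
next
  case (Cons x xs)
  have H: "\<forall>s\<in>S. \<forall>t\<in>S. op s t \<in> S" using cs_closed[OF C] .
  have R1: "\<forall>t\<in>S. (op (R x) \<circ> R) t \<in> S" using Cons.prems H by auto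
  have "\<forall>t\<in>S. Pl op R (y # x # xs) t = Pl op R (x # y # xs) t"
    using Pl_swap[OF C] Cons.prems by simp
  moreover have "\<forall>t\<in>S. Pl op (op (R x) \<circ> R) (y # xs) t = Pl op (op (R x) \<circ> R) (xs @ [y]) t"
    using Cons.IH[OF R1] Cons.prems by (simp add: comp_def)
  ultimately show ?case by (simp add: comp_def)
qed

lemma Pl_rot:
  assumes C: "cycle_set S op" and R: "\<forall>t\<in>S. R t \<in> S" and xs: "set xs \<subseteq> S"
  shows "\<forall>t\<in>S. Pl op R xs t = Pl op R (rotate n xs) t"
proof (induction n)
  case 0 then show ?case by simp
next
  case (Suc n)
  have st: "set (rotate n xs) \<subseteq> S" using xs by simp
  have "\<forall>t\<in>S. Pl op R (rotate n xs) t = Pl op R (rotate1 (rotate n xs)) t"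
  proof (cases "rotate n xs")
    case (Cons y zs)
    then show ?thesis using Pl_move[OF C R, of y zs] st by simp
  qed simp
  then show ?case using Suc by (simp add: rotate_Suc)
qed

definition cs_pow :: "'a set \<Rightarrow> ('a \<Rightarrow> 'a \<Rightarrow> 'a) \<Rightarrow> nat \<Rightarrow> ('a \<Rightarrow> 'a \<Rightarrow> 'a)" where
  "cs_pow S op k = (\<lambda>s\<in>S. \<lambda>t\<in>S. cs_psi op k s t)"

lemma psi_ident:
  assumes C: "cycle_set S op" and st: "s \<in> S" "t \<in> S" "u \<in> S"
  shows "cs_psi op k (cs_psi op k s t) (cs_psi op k s u) = cs_psi op k (cs_psi op k t s) (cs_psi op k t u)"
proof -
  have i: "\<forall>x\<in>S. id x \<in> S" by simp
  have l: "set (replicate k s @ replicate k t) \<subseteq> S" using st by auto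
  have "Pl op id (replicate k s @ replicate k t) u = Pl op id (rotate k (replicate k s @ replicate k t)) u"
    using Pl_rot[OF C i l] st by blast
  also have "rotate k (replicate k s @ replicate k t) = replicate k t @ replicate k s"
    using rotate_append[of "replicate k s" "replicate k t"] by simp
  finally show ?thesis by (simp add: Pl_app Pl_rep)
qed

lemma pow_cycle_set:
  assumes C: "cycle_set S op"
  shows "cycle_set S (cs_pow S op k)"
proof -
  have H: "\<forall>s\<in>S. \<forall>t\<in>S. op s t \<in> S" using cs_closed[OF C] .
  have b: "\<forall>s\<in>S. bij_betw (cs_pow S op k s) S S"
  proof
    fix s assume s: "s \<in> S"
    have "bij_betw (cs_psi op k s) S S" using psi_bij[OF C s] .
    then show "bij_betw (cs_pow S op k s) S S"
      by (rule bij_betw_cong[THEN iffD1, rotated]) (simp add: cs_pow_def s)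
  qed
  show ?thesis unfolding cycle_set_def
    using b psi_ident[OF C] psi_in[OF H] by (simp add: cs_pow_def)
qed

lemma pow_PiE:
  assumes C: "cycle_set S op"
  shows "cs_pow S op k \<in> S \<rightarrow>\<^sub>E (S \<rightarrow>\<^sub>E S)"
  using psi_in[OF cs_closed[OF C]] unfolding cs_pow_def by (auto simp: restrict_PiE_iff)

lemma pow_T:
  assumes C: "cycle_set S op" and s: "s \<in> S"
  shows "(cs_T (cs_pow S op k) ^^ m) s = (cs_T op ^^ (k*m)) s"
proof (induction m)
  case (Suc m)
  have H: "\<forall>s\<in>S. \<forall>t\<in>S. op s t \<in> S" using cs_closed[OF C] .
  have x: "(cs_T op ^^ (k*m)) s \<in> S" using T_in[OF H s] .
  have "(cs_T (cs_pow S op k) ^^ Suc m) s = cs_T (cs_pow S op k) ((cs_T op ^^ (k*m)) s)"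
    using Suc by simp
  also have "\<dots> = (cs_T op ^^ k) ((cs_T op ^^ (k*m)) s)"
    using x by (simp add: cs_T_def cs_pow_def psi_self)
  also have "\<dots> = (cs_T op ^^ (k*Suc m)) s"
    by (simp only: funpow_add comp_apply mult_Suc_right)
  finally show ?case .
qed simp

lemma pow_psi:
  assumes C: "cycle_set S op" and s: "s \<in> S" and t: "t \<in> S"
  shows "cs_psi (cs_pow S op k) m s t = cs_psi op (k*m) s t"
proof (induction m)
  case (Suc m)
  have H: "\<forall>s\<in>S. \<forall>t\<in>S. op s t \<in> S" using cs_closed[OF C] .
  have x: "(cs_T op ^^ (k*m)) s \<in> S" using T_in[OF H s] .
  have y: "cs_psi op (k*m) s t \<in> S" using psi_in[OF H s t] .
  have "cs_psi (cs_pow S op k) (Suc m) s t =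
      cs_pow S op k ((cs_T op ^^ (k*m)) s) (cs_psi op (k*m) s t)"
    using Suc pow_T[OF C s] by simp
  also have "\<dots> = cs_psi op k ((cs_T op ^^ (k*m)) s) (cs_psi op (k*m) s t)"
    using x y by (simp add: cs_pow_def)
  also have "\<dots> = cs_psi op (k*m + k) s t" by (simp add: psi_add)
  finally show ?case by (simp add: add.commute)
qed simp

definition agree :: "'a set \<Rightarrow> ('a \<Rightarrow> 'a \<Rightarrow> 'a) \<Rightarrow> ('a \<Rightarrow> 'a \<Rightarrow> 'a) \<Rightarrow> nat \<Rightarrow> bool" where
  "agree S op1 op2 j \<longleftrightarrow> (\<forall>s\<in>S. \<forall>t\<in>S. cs_psi op1 j s t = cs_psi op2 j s t)"

lemma agree_add:
  assumes H1: "\<forall>s\<in>S. \<forall>t\<in>S. op1 s t \<in> S"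
    and a: "agree S op1 op2 a" and b: "agree S op1 op2 b"
  shows "agree S op1 op2 (a + b)"
  unfolding agree_def
proof (intro ballI)
  fix s t assume s: "s \<in> S" and t: "t \<in> S"
  have "cs_psi op1 (a+b) s t = cs_psi op1 b (cs_psi op1 a s s) (cs_psi op1 a s t)"
    by (rule psi_add_app)
  also have "\<dots> = cs_psi op2 b (cs_psi op1 a s s) (cs_psi op1 a s t)"
    using b psi_in[OF H1] s t unfolding agree_def by blast
  also have "\<dots> = cs_psi op2 b (cs_psi op2 a s s) (cs_psi op2 a s t)"
    using a s t unfolding agree_def by simp
  also have "\<dots> = cs_psi op2 (a+b) s t" by (rule psi_add_app[symmetric])
  finally show "cs_psi op1 (a+b) s t = cs_psi op2 (a+b) s t" .
qed

lemma agree_sum: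
  assumes H1: "\<forall>s\<in>S. \<forall>t\<in>S. op1 s t \<in> S" and fin: "finite P"
  shows "(\<forall>p\<in>P. agree S op1 op2 (f p)) \<Longrightarrow> agree S op1 op2 (sum f P)"
  using fin
proof (induction P rule: finite_induct)
  case empty then show ?case by (simp add: agree_def)
next
  case (insert x F)
  then show ?case using agree_add[OF H1] by simp
qed

lemma determine:
  assumes H1: "\<forall>s\<in>S. \<forall>t\<in>S. op1 s t \<in> S"
    and t1: "cs_psi_trivial S op1 d" and t2: "cs_psi_trivial S op2 d" and d: "d \<ge> 1"
    and j: "agree S op1 op2 j" and jc: "[j = 1] (mod d)"
  shows "\<forall>s\<in>S. \<forall>t\<in>S. op1 s t = op2 s t"
proof -
  have ad: "agree S op1 op2 d" using t1 t2 unfolding agree_def cs_psi_trivial_def by simp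
  have aj: "agree S op1 op2 (j + d)" using agree_add[OF H1 j ad] .
  have "[j + d = 1 + 0] (mod d)" using cong_add[OF jc, of d 0] by (simp add: cong_def)
  then have "[j + d = 1] (mod d)" by simp
  then obtain q where q: "j + d = q * d + 1" using cong_le_nat[of 1 "j+d" d] d by auto
  have tq1: "cs_psi_trivial S op1 (d*q)" using triv_mult[OF t1] .
  have tq2: "cs_psi_trivial S op2 (d*q)" using triv_mult[OF t2] .
  show ?thesis
  proof (intro ballI)
    fix s t assume s: "s \<in> S" and t: "t \<in> S"
    have e1: "cs_psi op1 (d*q + 1) s t = op1 s t"
      using psi_add_app[of op1 "d*q" 1 s t] tq1 s t unfolding cs_psi_trivial_def by simp
    have e2: "cs_psi op2 (d*q + 1) s t = op2 s t"
      using psi_add_app[of op2 "d*q" 1 s t] tq2 s t unfolding cs_psi_trivial_def by simp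
    have "d*q + 1 = j + d" using q by (simp add: mult.commute)
    then have "agree S op1 op2 (d*q + 1)" using aj by simp
    then show "op1 s t = op2 s t" using e1 e2 s t unfolding agree_def by simp
  qed
qed

lemma number_part:
  fixes d :: nat
  assumes d: "d \<ge> 1"
  defines "q \<equiv> \<lambda>p. p ^ multiplicity p d"
  obtains e where "\<forall>p\<in>prime_factors d. d dvd e p * q p"
    and "[(\<Sum>p\<in>prime_factors d. e p) = 1] (mod d)"
proof -
  let ?P = "prime_factors d"
  have prodq: "(\<Prod>p\<in>?P. q p) = d" using prod_prime_factors[of d] d unfolding q_def by simp
  have qd: "q p dvd d" for p unfolding q_def by (rule multiplicity_dvd)
  have cop: "coprime (d div q p) (q p)" if "p \<in> ?P" for p
  proof -
    have pr: "prime p" using that by auto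
    have "\<not> p dvd (d div q p)" unfolding q_def using pr d by (intro multiplicity_decompose) (use not_prime_unit in auto)
    then have "coprime p (d div q p)" using prime_imp_coprime[OF pr] by blast
    then show ?thesis unfolding q_def by (simp add: ac_simps coprime_commute)
  qed
  have copq: "coprime (q p) (q p')" if "p \<in> ?P" "p' \<in> ?P" "p \<noteq> p'" for p p'
  proof -
    have "coprime p p'" using that by (intro primes_coprime) (auto dest: in_prime_factors_imp_prime)
    then show ?thesis unfolding q_def by simp
  qed
  define x where "x = (\<lambda>p. SOME x. [(d div q p) * x = Suc 0] (mod q p))"
  define e where "e = (\<lambda>p. (d div q p) * x p)"
  have e1: "[e p = 1] (mod q p)" if "p \<in> ?P" for p
    unfolding e_def x_def using someI_ex[OF cong_solve_coprime_nat[OF cop[OF that]]] by simp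
  have e0: "q p dvd e p'" if "p \<in> ?P" "p' \<in> ?P" "p \<noteq> p'" for p p'
  proof -
    have "q p dvd q p' * (d div q p')" using qd[of p] qd[of p'] by simp
    then have "q p dvd d div q p'" using coprime_dvd_mult_right_iff[OF copq[OF that]] by blast
    then show ?thesis unfolding e_def by simp
  qed
  have A: "\<forall>p\<in>?P. d dvd e p * q p"
  proof
    fix p assume "p \<in> ?P"
    have "e p * q p = d * x p" unfolding e_def using qd[of p] by (simp add: ac_simps)
    then show "d dvd e p * q p" by simp
  qed
  have "\<forall>p\<in>?P. [(\<Sum>p\<in>?P. e p) = 1] (mod q p)"
  proof
    fix p assume p: "p \<in> ?P"
    have sr: "(\<Sum>p\<in>?P. e p) = e p + (\<Sum>p'\<in>?P - {p}. e p')"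
      using p by (simp add: sum.remove)
    have "q p dvd (\<Sum>p'\<in>?P - {p}. e p')" using e0 p by (intro dvd_sum) auto
    then have "[(\<Sum>p'\<in>?P - {p}. e p') = 0] (mod q p)" by (simp add: cong_0_iff)
    then have "[e p + (\<Sum>p'\<in>?P - {p}. e p') = 1 + 0] (mod q p)"
      by (rule cong_add[OF e1[OF p]])
    then show "[(\<Sum>p\<in>?P. e p) = 1] (mod q p)" using sr by simp
  qed
  then have "[(\<Sum>p\<in>?P. e p) = 1] (mod (\<Prod>p\<in>?P. q p))"
    using copq by (intro cong_cong_prod_coprime_nat) auto
  then have "[(\<Sum>p\<in>?P. e p) = 1] (mod d)" using prodq by simp
  then show ?thesis using that A by blast
qed

theorem mainTheorem14:
  fixes n d :: nat
  assumes "n \<ge> 1" and "d \<ge> 1"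
  shows "N_cs n d \<le> (\<Prod>p\<in>prime_factors d. N_cs n (p ^ multiplicity p d))"
proof -
  define S where "S = {0..<n}"
  define P where "P = prime_factors d"
  define q where "q = (\<lambda>p::nat. p ^ multiplicity p d)"
  define Cs where "Cs = (\<lambda>x. {op \<in> S \<rightarrow>\<^sub>E (S \<rightarrow>\<^sub>E S). cycle_set S op \<and> class_divides S op x})"
  have N: "N_cs n x = card (Cs x)" for x unfolding N_cs_def Cs_def S_def by simp
  obtain e where eA: "\<forall>p\<in>P. d dvd e p * q p" and eB: "[(\<Sum>p\<in>P. e p) = 1] (mod d)"
    using number_part[OF assms(2)] unfolding P_def q_def by blast
  have finC: "finite (Cs x)" for x
    by (rule finite_subset[of _ "S \<rightarrow>\<^sub>E (S \<rightarrow>\<^sub>E S)"]) (auto simp: Cs_def S_def finite_PiE)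
  have finP: "finite P" unfolding P_def by simp
  have q1: "q p \<ge> 1" if "p \<in> P" for p
  proof -
    have "prime p" using that unfolding P_def by (auto dest: in_prime_factors_imp_prime)
    then have "p > 0" by (rule prime_gt_0_nat)
    then show ?thesis unfolding q_def by simp
  qed
  define F where "F = (\<lambda>op. \<lambda>p\<in>P. cs_pow S op (e p))"
  have maps: "F ` Cs d \<subseteq> PiE P (\<lambda>p. Cs (q p))"
  proof
    fix y assume "y \<in> F ` Cs d"
    then obtain op where op: "op \<in> Cs d" and y: "y = F op" by blast
    have C: "cycle_set S op" and td: "cs_psi_trivial S op d"
      using op class_divides_iff[OF assms(2)] unfolding Cs_def by auto
    have "cs_pow S op (e p) \<in> Cs (q p)" if p: "p \<in> P" for p
    proof -
      obtain m where m: "e p * q p = d * m" using eA p unfolding dvd_def by blast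
      have "cs_psi_trivial S (cs_pow S op (e p)) (q p)"
        unfolding cs_psi_trivial_def
      proof (intro ballI)
        fix s t assume s: "s \<in> S" and t: "t \<in> S"
        have "cs_psi (cs_pow S op (e p)) (q p) s t = cs_psi op (d*m) s t"
          using pow_psi[OF C s t] m by simp
        then show "cs_psi (cs_pow S op (e p)) (q p) s t = t"
          using triv_mult[OF td, of m] s t unfolding cs_psi_trivial_def by simp
      qed
      then have "class_divides S (cs_pow S op (e p)) (q p)"
        using class_divides_iff[OF q1[OF p]] by blast
      then show ?thesis unfolding Cs_def
        using pow_PiE[OF C] pow_cycle_set[OF C] by simp
    qed
    then show "y \<in> PiE P (\<lambda>p. Cs (q p))" unfolding y F_def by auto
  qed
  have inj: "inj_on F (Cs d)"
  proof (rule inj_onI)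
    fix op1 op2 assume o1: "op1 \<in> Cs d" and o2: "op2 \<in> Cs d" and eq: "F op1 = F op2"
    have C1: "cycle_set S op1" and td1: "cs_psi_trivial S op1 d"
      and P1: "op1 \<in> S \<rightarrow>\<^sub>E (S \<rightarrow>\<^sub>E S)"
      using o1 class_divides_iff[OF assms(2)] unfolding Cs_def by auto
    have C2: "cycle_set S op2" and td2: "cs_psi_trivial S op2 d"
      and P2: "op2 \<in> S \<rightarrow>\<^sub>E (S \<rightarrow>\<^sub>E S)"
      using o2 class_divides_iff[OF assms(2)] unfolding Cs_def by auto
    have ag: "agree S op1 op2 (e p)" if p: "p \<in> P" for p
    proof -
      have "cs_pow S op1 (e p) = cs_pow S op2 (e p)"
        using fun_cong[OF eq, of p] p unfolding F_def by simp
      then have "cs_pow S op1 (e p) s t = cs_pow S op2 (e p) s t" for s t by simp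
      then show ?thesis unfolding agree_def cs_pow_def by (metis (no_types, lifting) restrict_apply)
    qed
    have "agree S op1 op2 (\<Sum>p\<in>P. e p)"
      using agree_sum[OF cs_closed[OF C1] finP] ag by blast
    then have all: "\<forall>s\<in>S. \<forall>t\<in>S. op1 s t = op2 s t"
      using determine[OF cs_closed[OF C1] td1 td2 assms(2) _ eB] by blast
    show "op1 = op2"
    proof (rule extensionalityI)
      show "op1 \<in> extensional S" using P1 by (simp add: PiE_iff)
      show "op2 \<in> extensional S" using P2 by (simp add: PiE_iff)
      fix s assume s: "s \<in> S"
      show "op1 s = op2 s"
      proof (rule extensionalityI)
        show "op1 s \<in> extensional S" using P1 s by (auto simp: PiE_iff)
        show "op2 s \<in> extensional S" using P2 s by (auto simp: PiE_iff)
        show "\<And>t. t \<in> S \<Longrightarrow> op1 s t = op2 s t" using all s by blast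
      qed
    qed
  qed
  have "card (Cs d) \<le> card (PiE P (\<lambda>p. Cs (q p)))"
    using card_inj_on_le[OF inj maps] finP finC by (simp add: finite_PiE)
  also have "\<dots> = (\<Prod>p\<in>P. card (Cs (q p)))" using finP by (simp add: card_PiE)
  finally show ?thesis unfolding N P_def q_def .
qed

end
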